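(* Let $N, M \in \mathrm{GL}(3,\mathbb{Z})$ satisfy: (i) $NM = MN$; (ii) $1$ is an eigenvalue of $N^n M^m$ for all $(n,m) \in \mathbb{Z}^2$; (iii) $\{k \in \mathbb{Z}^3 : N^n M^m k = k \text{ for all } (n,m) \in \mathbb{Z}^2\} = \{0\}$. Then there exist $P \in \mathrm{GL}(3,\mathbb{Z})$ and integers $a,b,c,d$ such that $$P N P^{-1} = \begin{bmatrix} 1 & a & b \\ 0 & -1 & 0 \\ 0 & 0 & -1 \end{bmatrix}, \quad P M P^{-1} = \begin{bmatrix} -1 & 0 & c \\ 0 & -1 & d \\ 0 & 0 & 1 \end{bmatrix}.$$ In particular, the subgroup of $\mathrm{GL}(3,\mathbb{Z})$ generated by $N$ and $M$ is isomorphic to the Klein four-group. *)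

theory Defs
  imports "HOL-Analysis.Analysis"
begin

text \<open>Integer 3x3 matrices are elements of type int^3^3; GL(3,Z) membership is
  the library notion invertible (two-sided inverse with integer entries).\<close>

definition matpow :: "'a::semiring_1^'n^'n \<Rightarrow> nat \<Rightarrow> 'a^'n^'n" where
  "matpow A k = ((\<lambda>B. A ** B) ^^ k) (mat 1)"

definition matzpow :: "'a::semiring_1^'n^'n \<Rightarrow> int \<Rightarrow> 'a^'n^'n" where
  "matzpow A k = (if 0 \<le> k then matpow A (nat k) else matpow (matrix_inv A) (nat (- k)))"

definition int_mat_eigenvalue :: "int^'n^'n \<Rightarrow> complex \<Rightarrow> bool" where
  "int_mat_eigenvalue A lam \<longleftrightarrow>
     (\<exists>v :: complex^'n. v \<noteq> 0 \<and> (\<chi> i j. of_int (A$i$j)) *v v = lam *s v)"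

end

theory Submission
  imports Defs
begin

definition idot :: "int^3 \<Rightarrow> int^3 \<Rightarrow> int" where
  "idot x y = x$1*y$1 + x$2*y$2 + x$3*y$3"
definition icross :: "int^3 \<Rightarrow> int^3 \<Rightarrow> int^3" where
  "icross x y = vector [x$2*y$3 - x$3*y$2, x$3*y$1 - x$1*y$3, x$1*y$2 - x$2*y$1]"
definition det3 :: "int^3 \<Rightarrow> int^3 \<Rightarrow> int^3 \<Rightarrow> int" where
  "det3 a b c = idot a (icross b c)"

lemma icross_c [simp]:
  "icross x y $ 1 = x$2*y$3 - x$3*y$2"
  "icross x y $ 2 = x$3*y$1 - x$1*y$3"
  "icross x y $ 3 = x$1*y$2 - x$2*y$1"
  by (simp_all add: icross_def)

lemma vec3_eq: "(x::'a^3) = y \<longleftrightarrow> x$1 = y$1 \<and> x$2 = y$2 \<and> x$3 = y$3"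
  by (simp add: vec_eq_iff forall_3)

lemma mv3: "(A *v (x::'a::semiring_1^3)) $ i = A$i$1*x$1 + A$i$2*x$2 + A$i$3*x$3"
  by (simp add: matrix_vector_mult_def sum_3)

lemma mm3: "((A::'a::semiring_1^3^3) ** B) $ i $ j = A$i$1*B$1$j + A$i$2*B$2$j + A$i$3*B$3$j"
  by (simp add: matrix_matrix_mult_def sum_3)

lemma mat3: "(mat 1 :: 'a::zero_neq_one^3^3) $ i $ j = (if i = j then 1 else 0)"
  by (simp add: mat_def)

lemma mv_add: "(A::int^3^3) *v (x + y) = A *v x + A *v (y::int^3)"
  unfolding vec3_eq by (simp add: mv3 algebra_simps)
lemma mv_smult: "(A::int^3^3) *v (c *s x) = c *s (A *v x)"
  unfolding vec3_eq by (simp add: mv3 algebra_simps)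
lemma mv_neg: "(A::int^3^3) *v (- x) = - (A *v x)"
  unfolding vec3_eq by (simp add: mv3 algebra_simps)
lemma mv_diff: "(A::int^3^3) *v (x - y) = A *v x - A *v (y::int^3)"
  unfolding vec3_eq by (simp add: mv3 algebra_simps)

lemma cramer3:
  "det3 a b c *s z = det3 z b c *s a + det3 a z c *s b + det3 a b z *s c"
  unfolding vec3_eq det3_def idot_def by (simp; algebra)

lemma smult_cancel3: "(c::int) \<noteq> 0 \<Longrightarrow> c *s x = c *s y \<Longrightarrow> x = (y::int^3)"
  by (simp add: vec3_eq)

lemma idot_cross:
  "idot a (icross a b) = 0" "idot b (icross a b) = 0"
  "idot c (icross a b) = det3 a b c"
  unfolding det3_def idot_def by (simp; algebra)+

lemma det3_perm:
  "det3 a c b = - det3 a b c" "det3 b c a = det3 a b c"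
  unfolding det3_def idot_def by (simp; algebra)+

lemma det_rows: "det (C::int^3^3) = det3 (C$1) (C$2) (C$3)"
  unfolding det_3 det3_def idot_def by (simp; algebra)

lemma int_kernel:
  fixes C :: "int^3^3"
  assumes "det C = 0"
  shows "\<exists>x. x \<noteq> 0 \<and> C *v x = 0"
proof -
  have d: "det3 (C$1) (C$2) (C$3) = 0" using assms det_rows by simp
  have ker: "C *v x = 0" if "idot (C$1) x = 0" "idot (C$2) x = 0" "idot (C$3) x = 0" for x
    using that by (simp add: vec3_eq mv3 idot_def)
  show ?thesis
  proof (cases "icross (C$1) (C$2) \<noteq> 0")
    case True
    have "C *v icross (C$1) (C$2) = 0" by (rule ker) (simp_all add: idot_cross d)
    with True show ?thesis by blast
  next
    case F1: False
    show ?thesis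
    proof (cases "icross (C$1) (C$3) \<noteq> 0")
      case True
    have "C *v icross (C$1) (C$3) = 0" by (rule ker) (simp_all add: idot_cross d det3_perm(1)[of "C$1" "C$3"])
    with True show ?thesis by blast
    next
      case F2: False
      show ?thesis
      proof (cases "icross (C$2) (C$3) \<noteq> 0")
        case True
    have "C *v icross (C$2) (C$3) = 0" by (rule ker) (simp_all add: idot_cross d det3_perm(2)[where a="C$1" and b="C$2" and c="C$3"])
    with True show ?thesis by blast
      next
        case F3: False
        have z12: "icross (C$1) (C$2) = 0" and z13: "icross (C$1) (C$3) = 0"
          and z23: "icross (C$2) (C$3) = 0" using F1 F2 F3 by auto
        show ?thesis
        proof (cases "C = 0")
          case True
          then show ?thesis by (intro exI[of _ "vector [1,0,0]"]) (simp add: vec3_eq mv3)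
        next
          case False
          then obtain k where rk: "C$k \<noteq> 0" by (metis vec_eq_iff zero_index)
          have par: "icross (C$i) (C$k) = 0" for i
            using z12 z13 z23 exhaust_3[of i] exhaust_3[of k]
            by (auto simp: vec3_eq algebra_simps)
          define e :: "int^3 \<Rightarrow> int^3" where "e = icross (C$k)"
          have "\<exists>j::3. e (axis j 1) \<noteq> 0"
          proof (rule ccontr)
            assume "\<not> ?thesis"
            then have "e (axis 1 1) = 0" "e (axis 2 1) = 0" "e (axis 3 1) = 0" by auto
            then have "C$k = 0" by (simp add: e_def vec3_eq axis_def)
            with rk show False by simp
          qed
          then obtain j where j: "e (axis j 1) \<noteq> 0" by blast
          have "idot (C$i) (e (axis j 1)) = 0" for i
          proof -
            have p: "icross (C$i) (C$k) $ j = 0" using par[of i] by (simp add: vec_eq_iff)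
            show ?thesis using p exhaust_3[of j]
              by (auto simp: e_def idot_def axis_def algebra_simps)
          qed
          then show ?thesis using j by (intro exI[of _ "e (axis j 1)"]) (simp add: ker)
        qed
      qed
    qed
  qed
qed

lemma eig_fix:
  fixes A :: "int^3^3"
  assumes "int_mat_eigenvalue A 1"
  shows "\<exists>x. x \<noteq> 0 \<and> A *v x = x"
proof -
  define Cc :: "complex^3^3" where "Cc = (\<chi> i j. of_int (A$i$j))"
  obtain v :: "complex^3" where v: "v \<noteq> 0" "Cc *v v = 1 *s v"
    using assms unfolding int_mat_eigenvalue_def Cc_def by blast
  define Cm where "Cm = Cc - mat 1"
  have Cmv: "Cm *v v = 0" using v(2) unfolding Cm_def
    by (simp add: matrix_vector_mult_diff_rdistrib)
  have dC: "det Cm = 0"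
  proof (rule ccontr)
    assume "det Cm \<noteq> 0"
    then have "invertible Cm" by (simp add: invertible_det_nz)
    then obtain L where L: "L ** Cm = mat 1" unfolding invertible_def by blast
    have "v = L *v (Cm *v v)" by (simp add: matrix_vector_mul_assoc L)
    with Cmv v(1) show False by simp
  qed
  have "det Cm = of_int (det (A - mat 1))"
    unfolding Cm_def Cc_def det_3 by (simp add: mat3)
  with dC have "det (A - mat 1) = 0" by simp
  then obtain x where x: "x \<noteq> 0" "(A - mat 1) *v x = 0" using int_kernel by blast
  then have "A *v x = x" by (simp add: matrix_vector_mult_diff_rdistrib)
  with x(1) show ?thesis by blast
qed

lemma inv_props:
  assumes "invertible (A::'a::semiring_1^'n^'n)"
  shows "A ** matrix_inv A = mat 1" "matrix_inv A ** A = mat 1"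
proof -
  have "\<exists>A'. A ** A' = mat 1 \<and> A' ** A = mat 1" using assms unfolding invertible_def .
  then have "A ** matrix_inv A = mat 1 \<and> matrix_inv A ** A = mat 1"
    unfolding matrix_inv_def by (rule someI_ex)
  then show "A ** matrix_inv A = mat 1" "matrix_inv A ** A = mat 1" by auto
qed

lemma inv_unique:
  assumes "(A::'a::semiring_1^'n^'n) ** B = mat 1" "B ** A = mat 1"
  shows "matrix_inv A = B"
proof -
  have inv: "invertible A" using assms unfolding invertible_def by blast
  have "matrix_inv A = matrix_inv A ** (A ** B)" by (simp add: assms)
  also have "\<dots> = (matrix_inv A ** A) ** B" by (simp add: matrix_mul_assoc)
  also have "\<dots> = B" by (simp add: inv_props[OF inv])
  finally show ?thesis .
qed

lemma matpow_0 [simp]: "matpow A 0 = mat 1" by (simp add: matpow_def)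
lemma matpow_Suc: "matpow A (Suc k) = A ** matpow A k" by (simp add: matpow_def)

lemma matzpow_0 [simp]: "matzpow A 0 = mat 1" by (simp add: matzpow_def)
lemma matzpow_1 [simp]: "matzpow A 1 = A" by (simp add: matzpow_def matpow_Suc)
lemma matzpow_2: "matzpow A 2 = A ** A"
  by (simp add: matzpow_def numeral_2_eq_2 matpow_Suc)

lemma matpow_fix: "(A::int^3^3) *v x = x \<Longrightarrow> matpow A k *v x = x"
  by (induction k) (simp_all add: matpow_Suc matrix_vector_mul_assoc[symmetric])

lemma matzpow_fix:
  assumes "invertible (A::int^3^3)" "A *v x = x"
  shows "matzpow A n *v x = x"
proof -
  have "matrix_inv A *v x = x"
  proof -
    have "matrix_inv A *v x = matrix_inv A *v (A *v x)" using assms(2) by simp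
    also have "\<dots> = x" by (simp add: matrix_vector_mul_assoc inv_props[OF assms(1)])
    finally show ?thesis .
  qed
  then show ?thesis using assms by (simp add: matzpow_def matpow_fix)
qed

lemma idot_lin [simp]:
  "idot (u + v) w = idot u w + idot v w"
  "idot (u - v) w = idot u w - idot v w"
  "idot (c *s u) w = c * idot u w"
  "idot (- u) w = - idot u w"
  "idot 0 w = 0"
  by (simp_all add: idot_def algebra_simps)

lemma idot_self_nz: "w \<noteq> 0 \<Longrightarrow> idot w w \<noteq> 0"
proof -
  assume "w \<noteq> 0"
  then have "w$1 \<noteq> 0 \<or> w$2 \<noteq> 0 \<or> w$3 \<noteq> 0" by (simp add: vec3_eq)
  moreover have "0 \<le> w$i * w$i" for i by simp
  moreover have "w$i \<noteq> 0 \<Longrightarrow> 0 < w$i * w$i" for i by (auto simp: zero_less_mult_iff linorder_neq_iff)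
  ultimately have "idot w w > 0" unfolding idot_def
    by (smt (verit))
  then show ?thesis by simp
qed

lemma gram:
  "idot (icross x y) (icross x y) *s z =
     det3 z y (icross x y) *s x + det3 x z (icross x y) *s y
     + idot z (icross x y) *s icross x y"
  using cramer3[of x y "icross x y" z] idot_cross(3)[of "icross x y" x y]
    idot_cross(3)[of z x y] by simp

lemma icross_smult: "icross (c *s p) q = c *s icross p q"
  unfolding vec3_eq by (simp add: algebra_simps)

lemma primitive:
  fixes x :: "int^3"
  assumes "x \<noteq> 0"
  shows "\<exists>c p s. c \<noteq> 0 \<and> x = c *s p \<and> idot s p = 1"
proof -
  define h where "h = gcd (x$1) (gcd (x$2) (x$3))"
  have h0: "h \<noteq> 0" using assms by (simp add: h_def vec3_eq)
  obtain u2 u3 where u: "u2 * x$2 + u3 * x$3 = gcd (x$2) (x$3)" using bezout_int by blast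
  obtain a b where ab: "a * x$1 + b * gcd (x$2) (x$3) = h" using bezout_int h_def by blast
  define s :: "int^3" where "s = vector [a, b*u2, b*u3]"
  have "idot s x = a*x$1 + b*(u2*x$2 + u3*x$3)" by (simp add: s_def idot_def algebra_simps)
  then have ids: "idot s x = h" using u ab by simp
  have d1: "h dvd x$1" "h dvd x$2" "h dvd x$3" unfolding h_def
    by (auto intro: dvd_trans)
  define p :: "int^3" where "p = (\<chi> i. x$i div h)"
  have xp: "x = h *s p" unfolding vec3_eq p_def using d1 by simp
  have "idot s x = h * idot s p" unfolding xp by (simp add: idot_def algebra_simps)
  then have "h * idot s p = h * 1" using ids by simp
  then have "idot s p = 1" using h0 by simp
  with xp h0 show ?thesis by blast
qed

lemma par_mult:
  assumes "idot s p = 1" "icross p q = 0"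
  shows "q = idot s q *s p"
  using assms unfolding vec3_eq idot_def by (simp; algebra)

lemma comm_vec: "(A::int^3^3) ** B = B ** A \<Longrightarrow> A *v (B *v u) = B *v (A *v u)"
  by (simp add: matrix_vector_mul_assoc)

lemma key_a:
  fixes A B :: "int^3^3"
  assumes AB: "A ** B = B ** A"
    and nc: "\<And>x. A *v x = x \<Longrightarrow> B *v x = x \<Longrightarrow> x = 0"
    and fB: "z0 \<noteq> 0" "B *v z0 = z0"
    and fAB: "z1 \<noteq> 0" "A *v (B *v z1) = z1"
    and Ax: "A *v x = x" and Ay: "A *v y = y" and w0: "icross x y \<noteq> 0"
  shows False
proof -
  define w where "w = icross x y"
  define D where "D = idot w w"
  have D0: "D \<noteq> 0" using w0 idot_self_nz by (simp add: D_def w_def)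
  have xw: "idot x w = 0" and yw: "idot y w = 0" using idot_cross by (simp_all add: w_def)
  have gr: "D *s z = det3 z y w *s x + det3 x z w *s y + idot z w *s w" for z
    using gram[of x y z] by (simp add: D_def w_def)
  have Acomb: "A *v (a *s x + b *s y) = a *s x + b *s y" for a b
    by (simp add: mv_add mv_smult Ax Ay)
  have cancel: "A *v z = z" if "A *v (c *s z) = c *s z" "c \<noteq> 0" for c z
    using that by (simp add: mv_smult smult_cancel3)
  have comm: "A *v (B *v u) = B *v (A *v u)" for u using comm_vec[OF AB] .
  have c1: "idot u w = 0" if "A *v u = u" for u
  proof (rule ccontr)
    assume nz: "idot u w \<noteq> 0"
    have "A *v z = z" for z
    proof -
      have "det3 x y u *s z = det3 z y u *s x + det3 x z u *s y + det3 x y z *s u"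
        by (rule cramer3)
      moreover have "det3 x y u = idot u w" using idot_cross(3)[of u x y] by (simp add: w_def)
      ultimately have e: "idot u w *s z = det3 z y u *s x + det3 x z u *s y + det3 x y z *s u"
        by simp
      have "A *v (idot u w *s z) = idot u w *s z"
        unfolding e by (simp add: mv_add mv_smult Ax Ay that)
      then show ?thesis using nz cancel by blast
    qed
    then show False using nc fB by blast
  qed
  have Bfix: "A *v (B *v u) = B *v u" if "A *v u = u" for u using comm that by simp
  have c2: "idot (B *v w) w = D"
  proof -
    define g where "g = idot z0 w"
    have e: "D *s z0 = det3 z0 y w *s x + det3 x z0 w *s y + g *s w" using gr g_def by simp
    have g0: "g \<noteq> 0"
    proof
      assume "g = 0"
      then have "A *v (D *s z0) = D *s z0" using e Acomb by simp
      then have "A *v z0 = z0" using cancel D0 by blast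
      then show False using nc fB by blast
    qed
    have "D *s z0 = B *v (D *s z0)" using fB by (simp add: mv_smult)
    also have "\<dots> = det3 z0 y w *s (B *v x) + det3 x z0 w *s (B *v y) + g *s (B *v w)"
      unfolding e by (simp add: mv_add mv_smult)
    finally have "idot (D *s z0) w = idot (det3 z0 y w *s (B *v x) + det3 x z0 w *s (B *v y) + g *s (B *v w)) w"
      by simp
    then have "D * g = g * idot (B *v w) w"
      using c1[OF Bfix[OF Ax]] c1[OF Bfix[OF Ay]] by (simp add: g_def)
    then show ?thesis using g0 by simp
  qed
  have c3: "idot (A *v (B *v w)) w = D"
  proof -
    define g where "g = idot z1 w"
    have e: "D *s z1 = det3 z1 y w *s x + det3 x z1 w *s y + g *s w" using gr g_def by simp
    have g0: "g \<noteq> 0"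
    proof
      assume "g = 0"
      then have "A *v (D *s z1) = D *s z1" using e Acomb by simp
      then have a1: "A *v z1 = z1" using cancel D0 by blast
      then have "B *v z1 = z1" using fAB comm by metis
      then show False using nc a1 fAB by blast
    qed
    have "D *s z1 = A *v (B *v (D *s z1))" using fAB by (simp add: mv_smult)
    also have "\<dots> = det3 z1 y w *s (B *v x) + det3 x z1 w *s (B *v y) + g *s (A *v (B *v w))"
      unfolding e by (simp add: mv_add mv_smult Bfix Ax Ay)
    finally have "idot (D *s z1) w = idot (det3 z1 y w *s (B *v x) + det3 x z1 w *s (B *v y) + g *s (A *v (B *v w))) w"
      by simp
    then have "D * g = g * idot (A *v (B *v w)) w"
      using c1[OF Bfix[OF Ax]] c1[OF Bfix[OF Ay]] by (simp add: g_def)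
    then show ?thesis using g0 by simp
  qed
  define f where "f = det3 (B *v w) y w *s x + det3 x (B *v w) w *s y"
  have ef: "D *s (B *v w) = f + D *s w" using gr[of "B *v w"] c2 by (simp add: f_def)
  have Af: "A *v f = f" unfolding f_def by (rule Acomb)
  have c4: "idot (A *v w) w = D"
  proof -
    have "D *s (A *v (B *v w)) = A *v (D *s (B *v w))" by (simp add: mv_smult)
    also have "\<dots> = f + D *s (A *v w)" unfolding ef by (simp add: mv_add mv_smult Af)
    finally have "idot (D *s (A *v (B *v w))) w = idot (f + D *s (A *v w)) w" by simp
    then have "D * D = D * idot (A *v w) w" using c3 c1[OF Af] by simp
    then show ?thesis using D0 by simp
  qed
  define e where "e = det3 (A *v w) y w *s x + det3 x (A *v w) w *s y"
  have ee: "D *s (A *v w) = e + D *s w" using gr[of "A *v w"] c4 by (simp add: e_def)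
  have Ae: "A *v e = e" unfolding e_def by (rule Acomb)
  have e0: "e \<noteq> 0"
  proof
    assume "e = 0"
    then have "D *s (A *v w) = D *s w" using ee by simp
    then have "A *v w = w" using D0 smult_cancel3 by blast
    then have "idot w w = 0" using c1 by blast
    then show False using D0 D_def by simp
  qed
  have "D *s (A *v (B *v w)) = f + e + D *s w"
  proof -
    have "D *s (A *v (B *v w)) = A *v (D *s (B *v w))" by (simp add: mv_smult)
    also have "\<dots> = f + D *s (A *v w)" unfolding ef by (simp add: mv_add mv_smult Af)
    also have "\<dots> = f + e + D *s w" unfolding ee by (simp add: add.assoc)
    finally show ?thesis .
  qed
  moreover have "D *s (B *v (A *v w)) = B *v e + f + D *s w"
  proof -
    have "D *s (B *v (A *v w)) = B *v (D *s (A *v w))" by (simp add: mv_smult)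
    also have "\<dots> = B *v e + D *s (B *v w)" unfolding ee by (simp add: mv_add mv_smult)
    also have "\<dots> = B *v e + f + D *s w" unfolding ef by (simp add: add.assoc)
    finally show ?thesis .
  qed
  ultimately have "B *v e = e" using comm[of w] by (simp add: algebra_simps)
  then show False using nc Ae e0 by blast
qed

lemma key:
  fixes A B Bi :: "int^3^3"
  assumes AB: "A ** B = B ** A"
    and Bi: "B ** Bi = mat 1" "Bi ** B = mat 1"
    and nc: "\<And>x. A *v x = x \<Longrightarrow> B *v x = x \<Longrightarrow> x = 0"
    and fB: "\<exists>z. z \<noteq> 0 \<and> B *v z = z"
    and fAB: "\<exists>z. z \<noteq> 0 \<and> A *v (B *v z) = z"
    and Ax: "A *v x = x"
  shows "B *v x = - x"
proof (cases "x = 0")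
  case True then show ?thesis by simp
next
  case xnz: False
  obtain z0 where z0: "z0 \<noteq> 0" "B *v z0 = z0" using fB by blast
  obtain z1 where z1: "z1 \<noteq> 0" "A *v (B *v z1) = z1" using fAB by blast
  have par: "icross x y = 0" if "A *v y = y" for y
    using key_a[OF AB nc z0 z1 Ax that] by blast
  have ABi: "A ** Bi = Bi ** A"
  proof -
    have "Bi ** A = Bi ** A ** (B ** Bi)" by (simp add: Bi)
    also have "\<dots> = Bi ** (A ** B) ** Bi" by (simp add: matrix_mul_assoc)
    also have "\<dots> = Bi ** (B ** A) ** Bi" by (simp add: AB)
    also have "\<dots> = (Bi ** B) ** A ** Bi" by (simp add: matrix_mul_assoc)
    also have "\<dots> = A ** Bi" by (simp add: Bi)
    finally show ?thesis by simp
  qed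
  obtain c p s where cps: "c \<noteq> 0" "x = c *s p" "idot s p = 1" using primitive[OF xnz] by blast
  have p0: "p \<noteq> 0" using cps(3) by (auto simp: idot_def)
  have Ap: "A *v p = p" using Ax cps by (simp add: mv_smult smult_cancel3)
  have parp: "icross p y = 0" if "A *v y = y" for y
  proof -
    have "c *s icross p y = 0" using par[OF that] cps(2) by (simp add: icross_smult)
    then show ?thesis using cps(1) by (simp add: vec3_eq)
  qed
  have "A *v (B *v p) = B *v p" using comm_vec[OF AB] Ap by metis
  then have Bp: "B *v p = idot s (B *v p) *s p" using par_mult[OF cps(3) parp] by blast
  have "A *v (Bi *v p) = Bi *v p" using comm_vec[OF ABi] Ap by metis
  then have Bip: "Bi *v p = idot s (Bi *v p) *s p" using par_mult[OF cps(3) parp] by blast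
  define k where "k = idot s (B *v p)"
  define k' where "k' = idot s (Bi *v p)"
  have Bp': "B *v p = k *s p" using Bp k_def by simp
  have Bip': "Bi *v p = k' *s p" using Bip k'_def by simp
  have "p = B *v (Bi *v p)" by (simp add: matrix_vector_mul_assoc Bi)
  also have "\<dots> = (k' * k) *s p" unfolding Bip' by (simp add: mv_smult Bp')
  finally have pk: "p = (k' * k) *s p" .
  obtain i where pi: "p$i \<noteq> 0" using p0 by (metis vec_eq_iff zero_index)
  have "p$i = (k' * k) * p$i" using pk by (metis vector_smult_component)
  then have "k' * k = 1" using pi by simp
  then have "k = 1 \<or> k = -1" by (auto simp: zmult_eq_1_iff)
  moreover have "k \<noteq> 1"
  proof
    assume "k = 1"
    then have "B *v p = p" using Bp k_def by simp
    then show False using nc Ap p0 by blast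
  qed
  ultimately have "k = -1" by blast
  then have "B *v p = - p" using Bp' by (simp add: vec3_eq)
  then show ?thesis using cps(2) by (simp add: mv_smult)
qed

lemma col_axis: "((A::int^3^3) *v axis j 1) $ i = A $ i $ j"
  by (simp add: matrix_vector_mult_def axis_def if_distrib cong: if_cong)

lemma mat_eq_vec: "(\<And>z. (A::int^3^3) *v z = B *v z) \<Longrightarrow> A = B"
  by (metis col_axis vec_eq_iff)

lemma smult_eq_0: "c *s (v::int^3) = 0 \<longleftrightarrow> c = 0 \<or> v = 0"
  by (auto simp: vec3_eq)

lemma indep3:
  fixes N M :: "int^3^3"
  assumes v: "v1 \<noteq> 0" "v2 \<noteq> 0" "v3 \<noteq> 0"
    and N: "N *v v1 = v1" "N *v v2 = - v2" "N *v v3 = - v3"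
    and M: "M *v v2 = v2" "M *v v3 = - v3"
  shows "det3 v1 v2 v3 \<noteq> 0"
proof
  assume d0: "det3 v1 v2 v3 = 0"
  define C :: "int^3^3" where "C = (\<chi> i j. if j = 1 then v1$i else if j = 2 then v2$i else v3$i)"
  have "det C = det3 v1 v2 v3" unfolding C_def det_3 det3_def idot_def by (simp; algebra)
  then obtain x where x: "x \<noteq> 0" "C *v x = 0" using int_kernel d0 by auto
  have rel: "x$1 *s v1 + x$2 *s v2 + x$3 *s v3 = 0"
    using x(2) unfolding C_def vec3_eq by (simp add: mv3 algebra_simps)
  have "N *v (x$1 *s v1 + x$2 *s v2 + x$3 *s v3) = 0" using rel by simp
  then have rel2: "x$1 *s v1 - x$2 *s v2 - x$3 *s v3 = 0"
    by (simp add: mv_add mv_smult N algebra_simps)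
  have "(2 * x$1) *s v1 = (x$1 *s v1 + x$2 *s v2 + x$3 *s v3) + (x$1 *s v1 - x$2 *s v2 - x$3 *s v3)"
    unfolding vec3_eq by (simp add: algebra_simps)
  then have "(2 * x$1) *s v1 = 0" using rel rel2 by simp
  then have x1: "x$1 = 0" using v by (simp add: smult_eq_0)
  have rel3: "x$2 *s v2 + x$3 *s v3 = 0" using rel x1 by simp
  have "M *v (x$2 *s v2 + x$3 *s v3) = 0" using rel3 by simp
  then have rel4: "x$2 *s v2 - x$3 *s v3 = 0"
    by (simp add: mv_add mv_smult M algebra_simps)
  have "(2 * x$2) *s v2 = (x$2 *s v2 + x$3 *s v3) + (x$2 *s v2 - x$3 *s v3)"
    unfolding vec3_eq by (simp add: algebra_simps)
  then have "(2 * x$2) *s v2 = 0" using rel3 rel4 by simp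
  then have x2: "x$2 = 0" using v by (simp add: smult_eq_0)
  have "x$3 *s v3 = 0" using rel3 x2 by simp
  then have x3: "x$3 = 0" using v by (simp add: smult_eq_0)
  show False using x(1) x1 x2 x3 by (simp add: vec3_eq)
qed

lemma invol_from_basis:
  fixes N :: "int^3^3"
  assumes d: "det3 v1 v2 v3 \<noteq> 0"
    and h: "N *v (N *v v1) = v1" "N *v (N *v v2) = v2" "N *v (N *v v3) = v3"
  shows "N ** N = mat 1"
proof (rule mat_eq_vec)
  fix z
  have e: "det3 v1 v2 v3 *s z = det3 z v2 v3 *s v1 + det3 v1 z v3 *s v2 + det3 v1 v2 z *s v3"
    by (rule cramer3)
  have "det3 v1 v2 v3 *s ((N ** N) *v z) = det3 v1 v2 v3 *s z"
    by (simp add: matrix_vector_mul_assoc[symmetric] mv_smult[symmetric] e mv_add h)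
       (simp add: mv_smult h)
  then show "(N ** N) *v z = mat 1 *v z" using d smult_cancel3 by simp
qed

definition adj3 :: "int^3^3 \<Rightarrow> int^3^3" where
  "adj3 A = vector [
    vector [A$2$2*A$3$3 - A$2$3*A$3$2, A$1$3*A$3$2 - A$1$2*A$3$3, A$1$2*A$2$3 - A$1$3*A$2$2],
    vector [A$2$3*A$3$1 - A$2$1*A$3$3, A$1$1*A$3$3 - A$1$3*A$3$1, A$1$3*A$2$1 - A$1$1*A$2$3],
    vector [A$2$1*A$3$2 - A$2$2*A$3$1, A$1$2*A$3$1 - A$1$1*A$3$2, A$1$1*A$2$2 - A$1$2*A$2$1]]"

lemma mat3_eq: "(A::'a^3^3) = B \<longleftrightarrow>
  A$1$1 = B$1$1 \<and> A$1$2 = B$1$2 \<and> A$1$3 = B$1$3 \<and>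
  A$2$1 = B$2$1 \<and> A$2$2 = B$2$2 \<and> A$2$3 = B$2$3 \<and>
  A$3$1 = B$3$1 \<and> A$3$2 = B$3$2 \<and> A$3$3 = B$3$3"
  by (simp add: vec_eq_iff forall_3)

lemma adj3_mult1: "A ** adj3 A = (\<chi> i j. if i = j then det A else 0)"
  unfolding mat3_eq det_3 by (intro conjI; simp add: mm3 adj3_def; algebra)

lemma adj3_mult2: "adj3 A ** A = (\<chi> i j. if i = j then det A else 0)"
  unfolding mat3_eq det_3 by (intro conjI; simp add: mm3 adj3_def; algebra)

lemma adj3_inv1: "det A = 1 \<Longrightarrow> A ** adj3 A = mat 1"
  unfolding adj3_mult1 by (simp add: mat3_eq mat3)

lemma adj3_inv2: "det A = 1 \<Longrightarrow> adj3 A ** A = mat 1"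
  unfolding adj3_mult2 by (simp add: mat3_eq mat3)

lemma completion:
  fixes p s :: "int^3"
  assumes "idot s p = 1"
  shows "\<exists>Q::int^3^3. det Q = 1 \<and> Q$1$1 = p$1 \<and> Q$2$1 = p$2 \<and> Q$3$1 = p$3"
proof -
  obtain g q2 q3 al be where gq: "p$2 = g * q2" "p$3 = g * q3" "al * q2 + be * q3 = 1"
  proof (cases "p$2 = 0 \<and> p$3 = 0")
    case True
    then show ?thesis using that[of 0 1 0 1 0] by simp
  next
    case False
    define g where "g = gcd (p$2) (p$3)"
    have "coprime (p$2 div g) (p$3 div g)" using div_gcd_coprime False g_def by blast
    then have "gcd (p$2 div g) (p$3 div g) = 1" by (simp add: coprime_iff_gcd_eq_1)
    then obtain al be where "al * (p$2 div g) + be * (p$3 div g) = 1" using bezout_int by metis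
    moreover have "p$2 = g * (p$2 div g)" "p$3 = g * (p$3 div g)" by (simp_all add: g_def)
    ultimately show ?thesis using that by blast
  qed
  define ga where "ga = s$1"
  define de where "de = s$2 * q2 + s$3 * q3"
  have gd: "ga * p$1 + de * g = 1" using assms gq unfolding ga_def de_def idot_def
    by (simp add: algebra_simps)
  define Q :: "int^3^3" where "Q = vector [vector [p$1, -de, 0], vector [g*q2, ga*q2, -be],
     vector [g*q3, ga*q3, al]]"
  have "det Q = (ga * p$1 + de * g) * (al * q2 + be * q3)" unfolding Q_def det_3
    by (simp; algebra)
  then have "det Q = 1" using gd gq by simp
  moreover have "Q$1$1 = p$1 \<and> Q$2$1 = p$2 \<and> Q$3$1 = p$3" using gq by (simp add: Q_def)
  ultimately show ?thesis by blast
qed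

lemma primitive2:
  fixes x y :: int
  assumes "x \<noteq> 0 \<or> y \<noteq> 0"
  shows "\<exists>k u1 u2 al be. k \<noteq> 0 \<and> x = k * u1 \<and> y = k * u2 \<and> al * u1 + be * u2 = 1"
proof -
  define g where "g = gcd x y"
  have g0: "g \<noteq> 0" using assms g_def by simp
  have "coprime (x div g) (y div g)" using div_gcd_coprime assms g_def by blast
  then have "gcd (x div g) (y div g) = 1" by (simp add: coprime_iff_gcd_eq_1)
  then obtain al be where "al * (x div g) + be * (y div g) = 1" using bezout_int by metis
  moreover have "x = g * (x div g)" "y = g * (y div g)" by (simp_all add: g_def)
  ultimately show ?thesis using g0 by blast
qed

lemma two_by_two:
  fixes m22 m23 m32 m33 :: int
  assumes sq: "m22*m22 + m23*m32 = 1" "m22*m23 + m23*m33 = 0"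
      "m32*m22 + m33*m32 = 0" "m32*m23 + m33*m33 = 1"
    and notneg: "\<not>(m22 = -1 \<and> m23 = 0 \<and> m32 = 0 \<and> m33 = -1)"
    and notpos: "\<not>(m22 = 1 \<and> m23 = 0 \<and> m32 = 0 \<and> m33 = 1)"
  shows "\<exists>u1 u2 al be. al*u1 + be*u2 = 1 \<and> m22*u1 + m23*u2 = -u1 \<and> m32*u1 + m33*u2 = -u2
     \<and> -u2*(-m22*be + m23*al) + u1*(-m32*be + m33*al) = 1"
proof -
  obtain c1 c2 where c: "c1 \<noteq> 0 \<or> c2 \<noteq> 0" "m22*c1 + m23*c2 = -c1" "m32*c1 + m33*c2 = -c2"
  proof (cases "m22 - 1 \<noteq> 0 \<or> m32 \<noteq> 0")
    case True
    show ?thesis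
      by (rule that[of "m22 - 1" m32]) (use True sq in \<open>auto simp: algebra_simps\<close>)
  next
    case False
    then have "m23 \<noteq> 0 \<or> m33 - 1 \<noteq> 0" using notpos by auto
    show ?thesis
      by (rule that[of m23 "m33 - 1"]) (use \<open>m23 \<noteq> 0 \<or> m33 - 1 \<noteq> 0\<close> sq in \<open>auto simp: algebra_simps\<close>)
  qed
  obtain k u1 u2 al be where ku: "k \<noteq> 0" "c1 = k * u1" "c2 = k * u2" "al * u1 + be * u2 = 1"
    using primitive2[OF c(1)] by blast
  have e1: "m22*u1 + m23*u2 = -u1"
  proof -
    have "k * (m22*u1 + m23*u2) = k * (-u1)" using c(2) ku by (simp add: algebra_simps)
    then show ?thesis using ku(1) by (metis mult_cancel_left)
  qed
  have e2: "m32*u1 + m33*u2 = -u2"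
  proof -
    have "k * (m32*u1 + m33*u2) = k * (-u2)" using c(3) ku by (simp add: algebra_simps)
    then show ?thesis using ku(1) by (metis mult_cancel_left)
  qed
  define d where "d = al*(-m22*be + m23*al) + be*(-m32*be + m33*al)"
  define e where "e = -u2*(-m22*be + m23*al) + u1*(-m32*be + m33*al)"
  \<comment> \<open>T = Q2inv M' Q2 = [[-1, d],[0, e]] and T^2 = I\<close>
  have Te: "e * e = 1" and Td: "d * (e - 1) = 0"
    using sq e1 e2 ku(4) unfolding d_def e_def by algebra+
  have "e = 1"
  proof (rule ccontr)
    assume "e \<noteq> 1"
    then have em: "e = -1" using Te by (auto simp: zmult_eq_1_iff)
    then have d0: "d = 0" using Td by simp
    \<comment> \<open>then M' = Q2 T Q2inv = -I\<close>
    have "m22 = -1 \<and> m23 = 0 \<and> m32 = 0 \<and> m33 = -1"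
      using em d0 e1 e2 ku(4) unfolding d_def e_def by (intro conjI; algebra)
    then show False using notneg by blast
  qed
  then have "-u2*(-m22*be + m23*al) + u1*(-m32*be + m33*al) = 1" using e_def by simp
  then show ?thesis using e1 e2 ku(4) by blast
qed

lemma conj_vec:
  assumes "Q ** Qi = mat 1"
  shows "((Qi::int^3^3) ** X ** Q) *v (Qi *v v) = Qi *v (X *v v)"
proof -
  have "((Qi ** X ** Q) *v (Qi *v v)) = (Qi ** X ** (Q ** Qi)) *v v"
    by (simp add: matrix_vector_mul_assoc matrix_mul_assoc)
  then show ?thesis using assms by (simp add: matrix_vector_mul_assoc)
qed

lemma conj_invol:
  assumes "Q ** Qi = mat 1" "X ** X = mat 1"
  shows "((Qi::int^3^3) ** X ** Q) ** (Qi ** X ** Q) = Qi ** Q"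
proof -
  have "(Qi ** X ** Q) ** (Qi ** X ** Q) = Qi ** X ** (Q ** Qi) ** X ** Q"
    by (simp add: matrix_mul_assoc)
  also have "\<dots> = Qi ** (X ** X) ** Q" using assms(1) by (simp add: matrix_mul_assoc)
  finally show ?thesis using assms(2) by simp
qed

lemma low_block:
  fixes X :: "int^3^3"
  assumes d: "det3 w1 w2 w3 \<noteq> 0"
    and x1: "(X *v w1)$2 = 0" "(X *v w1)$3 = 0" and x2: "X *v w2 = 0" and x3: "X *v w3 = 0"
  shows "(X *v z)$2 = 0 \<and> (X *v z)$3 = 0"
proof -
  have "det3 w1 w2 w3 *s (X *v z) = X *v (det3 w1 w2 w3 *s z)" by (simp add: mv_smult)
  also have "\<dots> = det3 z w2 w3 *s (X *v w1)"
    by (subst cramer3) (simp add: mv_add mv_smult x2 x3)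
  finally have e: "det3 w1 w2 w3 *s (X *v z) = det3 z w2 w3 *s (X *v w1)" .
  have "det3 w1 w2 w3 * (X *v z)$2 = 0" "det3 w1 w2 w3 * (X *v z)$3 = 0"
    using arg_cong[OF e, of "\<lambda>v. v$2"] arg_cong[OF e, of "\<lambda>v. v$3"] x1 by simp_all
  then show ?thesis using d by simp
qed

lemma normal_form:
  fixes N M :: "int^3^3"
  assumes NN: "N ** N = mat 1" and MM: "M ** M = mat 1"
    and v: "v1 \<noteq> 0" "v2 \<noteq> 0" "v3 \<noteq> 0"
    and ev: "N *v v1 = v1" "M *v v1 = - v1" "N *v v2 = - v2" "M *v v2 = v2"
      "N *v v3 = - v3" "M *v v3 = - v3"
  shows "\<exists>P::int^3^3. \<exists>a b c d :: int. invertible P \<and>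
            P ** N ** matrix_inv P = vector [vector [1, a, b], vector [0, -1, 0], vector [0, 0, -1]] \<and>
            P ** M ** matrix_inv P = vector [vector [-1, 0, c], vector [0, -1, d], vector [0, 0, 1]]"
proof -
  obtain c0 p s where cps: "c0 \<noteq> 0" "v1 = c0 *s p" "idot s p = 1" using primitive[OF v(1)] by blast
  have Np: "N *v p = p" using ev(1) cps by (simp add: mv_smult smult_cancel3)
  have Mp: "M *v p = - p"
  proof -
    have "c0 *s (M *v p) = c0 *s (- p)" using ev(2) cps by (simp add: mv_smult vec3_eq)
    then show ?thesis using cps(1) smult_cancel3 by blast
  qed
  obtain Q1 :: "int^3^3" where Q1: "det Q1 = 1" "Q1$1$1 = p$1" "Q1$2$1 = p$2" "Q1$3$1 = p$3"
    using completion[OF cps(3)] by blast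
  define Qi where "Qi = adj3 Q1"
  have QQi: "Q1 ** Qi = mat 1" and QiQ: "Qi ** Q1 = mat 1"
    using adj3_inv1[OF Q1(1)] adj3_inv2[OF Q1(1)] by (simp_all add: Qi_def)
  define e1 :: "int^3" where "e1 = axis 1 1"
  have Qe1: "Q1 *v e1 = p" unfolding e1_def vec3_eq using Q1 by (simp add: col_axis)
  have Qip: "Qi *v p = e1" unfolding Qe1[symmetric] by (simp add: matrix_vector_mul_assoc QiQ)
  define N1 where "N1 = Qi ** N ** Q1"
  define M1 where "M1 = Qi ** M ** Q1"
  have NN1: "N1 ** N1 = mat 1" unfolding N1_def using conj_invol[OF QQi NN] QiQ by simp
  have MM1: "M1 ** M1 = mat 1" unfolding M1_def using conj_invol[OF QQi MM] QiQ by simp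
  have N1c: "N1 *v (Qi *v v) = Qi *v (N *v v)" for v unfolding N1_def by (rule conj_vec[OF QQi])
  have M1c: "M1 *v (Qi *v v) = Qi *v (M *v v)" for v unfolding M1_def by (rule conj_vec[OF QQi])
  define w1 where "w1 = Qi *v v1"
  define w2 where "w2 = Qi *v v2"
  define w3 where "w3 = Qi *v v3"
  have wnz: "w \<noteq> 0" if "Q1 *v w \<noteq> 0" for w using that by auto
  have Qw: "Q1 *v (Qi *v v) = v" for v by (simp add: matrix_vector_mul_assoc QQi)
  have w0: "w1 \<noteq> 0" "w2 \<noteq> 0" "w3 \<noteq> 0" unfolding w1_def w2_def w3_def
    using wnz Qw v by metis+
  have wev: "N1 *v w1 = w1" "M1 *v w1 = - w1" "N1 *v w2 = - w2" "M1 *v w2 = w2"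
      "N1 *v w3 = - w3" "M1 *v w3 = - w3"
    unfolding w1_def w2_def w3_def N1c M1c ev by (simp_all add: mv_neg)
  have w1e: "w1 = c0 *s e1" unfolding w1_def cps(2) mv_smult Qip ..
  have w1l: "w1$2 = 0" "w1$3 = 0" unfolding w1e e1_def by (simp_all add: axis_def)
  have D: "det3 w1 w2 w3 \<noteq> 0" using indep3[OF w0 wev(1,3,5) wev(4,6)] .
  have N1col: "N1 *v e1 = e1" using N1c[of p] Np Qip by simp
  have M1col: "M1 *v e1 = - e1" using M1c[of p] Mp Qip by (simp add: mv_neg)
  have n1: "N1$1$1 = 1" "N1$2$1 = 0" "N1$3$1 = 0"
    using N1col unfolding e1_def vec3_eq col_axis by (simp_all add: axis_def)
  have m1: "M1$1$1 = -1" "M1$2$1 = 0" "M1$3$1 = 0"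
    using M1col unfolding e1_def vec3_eq col_axis by (simp_all add: axis_def)
  have lowN: "((N1 + mat 1) *v z)$2 = 0 \<and> ((N1 + mat 1) *v z)$3 = 0" for z
    by (rule low_block[OF D]) (simp_all add: matrix_vector_mult_add_rdistrib wev w1l)
  have n2: "N1$2$2 = -1" "N1$3$2 = 0" "N1$2$3 = 0" "N1$3$3 = -1"
    using lowN[of "axis 2 1"] lowN[of "axis 3 1"] by (simp_all add: mv3 axis_def mat3)
  have notneg: "\<not>(M1$2$2 = -1 \<and> M1$2$3 = 0 \<and> M1$3$2 = 0 \<and> M1$3$3 = -1)"
  proof
    assume h: "M1$2$2 = -1 \<and> M1$2$3 = 0 \<and> M1$3$2 = 0 \<and> M1$3$3 = -1"
    have "(M1 *v w2)$2 = - w2$2" "(M1 *v w2)$3 = - w2$3" using h m1 by (simp_all add: mv3)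
    then have "w2$2 = 0" "w2$3 = 0" using wev(4) by (simp_all add: vec3_eq)
    then have "det3 w1 w2 w3 = 0" using w1l by (simp add: det3_def idot_def)
    then show False using D by simp
  qed
  have notpos: "\<not>(M1$2$2 = 1 \<and> M1$2$3 = 0 \<and> M1$3$2 = 0 \<and> M1$3$3 = 1)"
  proof
    assume h: "M1$2$2 = 1 \<and> M1$2$3 = 0 \<and> M1$3$2 = 0 \<and> M1$3$3 = 1"
    have "(M1 *v w3)$2 = w3$2" "(M1 *v w3)$3 = w3$3" using h m1 by (simp_all add: mv3)
    then have "w3$2 = 0" "w3$3 = 0" using wev(6) by (simp_all add: vec3_eq)
    then have "det3 w1 w2 w3 = 0" using w1l by (simp add: det3_def idot_def)
    then show False using D by simp
  qed
  have sqM: "\<And>i j. (M1 ** M1)$i$j = mat 1 $ i $ j" using MM1 by simp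
  have sq: "M1$2$2*M1$2$2 + M1$2$3*M1$3$2 = 1" "M1$2$2*M1$2$3 + M1$2$3*M1$3$3 = 0"
      "M1$3$2*M1$2$2 + M1$3$3*M1$3$2 = 0" "M1$3$2*M1$2$3 + M1$3$3*M1$3$3 = 1"
    using sqM[of 2 2] sqM[of 2 3] sqM[of 3 2] sqM[of 3 3] m1 by (simp_all add: mm3 mat3)
  have r: "- M1$1$2 + M1$1$2*M1$2$2 + M1$1$3*M1$3$2 = 0"
      "- M1$1$3 + M1$1$2*M1$2$3 + M1$1$3*M1$3$3 = 0"
    using sqM[of 1 2] sqM[of 1 3] m1 by (simp_all add: mm3 mat3)
  obtain u1 u2 al be where uab: "al*u1 + be*u2 = 1"
    "M1$2$2*u1 + M1$2$3*u2 = -u1" "M1$3$2*u1 + M1$3$3*u2 = -u2"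
    "-u2*(-M1$2$2*be + M1$2$3*al) + u1*(-M1$3$2*be + M1$3$3*al) = 1"
    using two_by_two[OF sq notneg notpos] by blast
  have "2 * (M1$1$2*u1 + M1$1$3*u2) = 0" using r uab(2,3) by algebra
  then have ru: "M1$1$2*u1 + M1$1$3*u2 = 0" by simp
  define B :: "int^3^3" where "B = vector [vector [1,0,0], vector [0,u1,-be], vector [0,u2,al]]"
  define Bi :: "int^3^3" where "Bi = vector [vector [1,0,0], vector [0,al,be], vector [0,-u2,u1]]"
  have BBi: "B ** Bi = mat 1" unfolding B_def Bi_def mat3_eq using uab(1)
    by (simp add: mm3 mat3 algebra_simps)
  have BiB: "Bi ** B = mat 1" unfolding B_def Bi_def mat3_eq using uab(1)
    by (simp add: mm3 mat3 algebra_simps)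
  define P where "P = Bi ** Qi"
  define Pinv where "Pinv = Q1 ** B"
  have PP: "P ** Pinv = mat 1"
  proof -
    have "P ** Pinv = Bi ** (Qi ** Q1) ** B" by (simp add: P_def Pinv_def matrix_mul_assoc)
    then show ?thesis using QiQ BiB by simp
  qed
  have PP2: "Pinv ** P = mat 1"
  proof -
    have "Pinv ** P = Q1 ** (B ** Bi) ** Qi" by (simp add: P_def Pinv_def matrix_mul_assoc)
    then show ?thesis using QQi BBi by simp
  qed
  have invP: "invertible P" using PP PP2 unfolding invertible_def by blast
  have mi: "matrix_inv P = Pinv" using inv_unique[OF PP PP2] .
  have PN: "P ** N ** Pinv = Bi ** N1 ** B"
    by (simp add: P_def Pinv_def N1_def matrix_mul_assoc)
  have PM: "P ** M ** Pinv = Bi ** M1 ** B"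
    by (simp add: P_def Pinv_def M1_def matrix_mul_assoc)
  have fN: "Bi ** N1 ** B = vector [vector [1, N1$1$2*u1 + N1$1$3*u2, -N1$1$2*be + N1$1$3*al],
      vector [0, -1, 0], vector [0, 0, -1]]"
    unfolding mat3_eq B_def Bi_def using n1 n2 uab(1)
    by (simp add: mm3 algebra_simps)
  have fM: "Bi ** M1 ** B = vector [vector [-1, 0, -M1$1$2*be + M1$1$3*al],
      vector [0, -1, al*(-M1$2$2*be + M1$2$3*al) + be*(-M1$3$2*be + M1$3$3*al)], vector [0, 0, 1]]"
    unfolding mat3_eq B_def Bi_def using m1 uab ru
    by (simp add: mm3; algebra)
  show ?thesis
    using invP mi PN PM fN fM by metis
qed

lemma matpow_invol: "A ** A = mat 1 \<Longrightarrow> matpow A k = (if even k then mat 1 else A)"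
  by (induction k) (auto simp: matpow_Suc)

lemma matzpow_invol:
  assumes "(A::int^3^3) ** A = mat 1"
  shows "matzpow A n = (if even n then mat 1 else A)"
proof -
  have "matrix_inv A = A" using inv_unique[OF assms assms] .
  then show ?thesis using assms
    by (auto simp: matzpow_def matpow_invol even_nat_iff)
qed

lemma neg_self: "(x::int^3) = - x \<Longrightarrow> x = 0"
  by (simp add: vec3_eq)

theorem lemma2p2:
  fixes N M :: "int^3^3"
  assumes invN: "invertible N" and invM: "invertible M"
    and comm: "N ** M = M ** N"
    and eig: "\<And>n m :: int. int_mat_eigenvalue (matzpow N n ** matzpow M m) 1"
    and fix0: "{k :: int^3. \<forall>n m :: int. (matzpow N n ** matzpow M m) *v k = k} = {0}"
  shows "(\<exists>P :: int^3^3. \<exists>a b c d :: int. invertible P \<and>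
            P ** N ** matrix_inv P = vector [vector [1, a, b], vector [0, -1, 0], vector [0, 0, -1]] \<and>
            P ** M ** matrix_inv P = vector [vector [-1, 0, c], vector [0, -1, d], vector [0, 0, 1]])
       \<and> card {matzpow N n ** matzpow M m | n m :: int. True} = 4
       \<and> (\<forall>g \<in> {matzpow N n ** matzpow M m | n m :: int. True}. g ** g = mat 1)"
proof -
  have fx: "\<exists>z. z \<noteq> 0 \<and> (matzpow N n ** matzpow M m) *v z = z" for n m
    using eig_fix[OF eig[of n m]] .
  have fN: "\<exists>z. z \<noteq> 0 \<and> N *v z = z" using fx[of 1 0] by simp
  have fM: "\<exists>z. z \<noteq> 0 \<and> M *v z = z" using fx[of 0 1] by simp
  have fNM: "\<exists>z. z \<noteq> 0 \<and> N *v (M *v z) = z" using fx[of 1 1]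
    by (simp add: matrix_vector_mul_assoc)
  have fNMM: "\<exists>z. z \<noteq> 0 \<and> (N ** M) *v (M *v z) = z" using fx[of 1 2]
    by (simp add: matzpow_2 matrix_vector_mul_assoc matrix_mul_assoc)
  have nc: "x = 0" if "N *v x = x" "M *v x = x" for x
  proof -
    have "(matzpow N n ** matzpow M m) *v x = x" for n m
      using matzpow_fix[OF invN that(1)] matzpow_fix[OF invM that(2)]
      by (simp add: matrix_vector_mul_assoc[symmetric])
    then have "x \<in> {k :: int^3. \<forall>n m :: int. (matzpow N n ** matzpow M m) *v k = k}" by blast
    then show ?thesis using fix0 by blast
  qed
  note Ninv = inv_props[OF invN]
  note Minv = inv_props[OF invM]
  have R1: "M *v x = - x" if "N *v x = x" for x
    by (rule key[OF comm Minv nc fM fNM that]) blast+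
  have MN: "M ** N = N ** M" using comm by simp
  have fMN: "\<exists>z. z \<noteq> 0 \<and> M *v (N *v z) = z" using fNM comm_vec[OF comm] by metis
  have R2: "N *v x = - x" if "M *v x = x" for x
    by (rule key[OF MN Ninv _ fN fMN that]) (use nc in blast)
  have ABc: "(N ** M) ** M = M ** (N ** M)"
  proof -
    have "(N ** M) ** M = (M ** N) ** M" using comm by simp
    also have "\<dots> = M ** (N ** M)" by (simp add: matrix_mul_assoc)
    finally show ?thesis .
  qed
  have nc3: "x = 0" if "(N ** M) *v x = x" "M *v x = x" for x
  proof -
    have "N *v x = x" using that by (metis matrix_vector_mul_assoc)
    then show ?thesis using nc that(2) by blast
  qed
  have R3: "M *v x = - x" if "(N ** M) *v x = x" for x
    by (rule key[OF ABc Minv nc3 fM fNMM that]) blast+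
  obtain v1 where v1: "v1 \<noteq> 0" "N *v v1 = v1" using fN by blast
  obtain v2 where v2: "v2 \<noteq> 0" "M *v v2 = v2" using fM by blast
  obtain v3 where v3: "v3 \<noteq> 0" "N *v (M *v v3) = v3" using fNM by blast
  have v1M: "M *v v1 = - v1" using R1 v1 by blast
  have v2N: "N *v v2 = - v2" using R2 v2 by blast
  have v3M: "M *v v3 = - v3" using R3 v3 by (simp add: matrix_vector_mul_assoc)
  have v3N: "N *v v3 = - v3" using v3 v3M by (simp add: mv_neg vec3_eq)
  have D: "det3 v1 v2 v3 \<noteq> 0" using indep3[OF v1(1) v2(1) v3(1) v1(2) v2N v3N v2(2) v3M] .
  have NN: "N ** N = mat 1"
    by (rule invol_from_basis[OF D]) (simp_all add: v1 v2N v3N mv_neg)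
  have MM: "M ** M = mat 1"
    by (rule invol_from_basis[OF D]) (simp_all add: v1M v2 v3M mv_neg)
  have part1: "\<exists>P :: int^3^3. \<exists>a b c d :: int. invertible P \<and>
            P ** N ** matrix_inv P = vector [vector [1, a, b], vector [0, -1, 0], vector [0, 0, -1]] \<and>
            P ** M ** matrix_inv P = vector [vector [-1, 0, c], vector [0, -1, d], vector [0, 0, 1]]"
    by (rule normal_form[OF NN MM v1(1) v2(1) v3(1) v1(2) v1M v2N v2(2) v3N v3M])
  have S: "{matzpow N n ** matzpow M m | n m :: int. True} = {mat 1, N, M, N ** M}"
  proof
    show "{matzpow N n ** matzpow M m | n m :: int. True} \<subseteq> {mat 1, N, M, N ** M}"
      using matzpow_invol[OF NN] matzpow_invol[OF MM] by auto
    show "{mat 1, N, M, N ** M} \<subseteq> {matzpow N n ** matzpow M m | n m :: int. True}"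
    proof -
      have "mat 1 = matzpow N 0 ** matzpow M 0" by simp
      moreover have "N = matzpow N 1 ** matzpow M 0" by simp
      moreover have "M = matzpow N 0 ** matzpow M 1" by simp
      moreover have "N ** M = matzpow N 1 ** matzpow M 1" by simp
      ultimately show ?thesis by blast
    qed
  qed
  have d1: "N \<noteq> mat 1" using v2N v2(1) neg_self by force
  have d2: "M \<noteq> mat 1" using v1M v1(1) neg_self by force
  have d3: "N \<noteq> M" using v1M v1 neg_self by force
  have nmv1: "(N ** M) *v v1 = - v1" using v1M v1 by (simp add: matrix_vector_mul_assoc[symmetric] mv_neg)
  have nmv2: "(N ** M) *v v2 = - v2" using v2N v2 by (simp add: matrix_vector_mul_assoc[symmetric])
  have d4: "N ** M \<noteq> mat 1" using nmv1 v1(1) neg_self by force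
  have d5: "N ** M \<noteq> N" using nmv1 v1 neg_self by force
  have d6: "N ** M \<noteq> M" using nmv2 v2 neg_self by force
  have card: "card {mat 1, N, M, N ** M} = 4"
    using d1 d2 d3 d4 d5 d6 by (simp add: eq_commute)
  have NMsq: "(N ** M) ** (N ** M) = mat 1"
  proof -
    have "(N ** M) ** (N ** M) = N ** (M ** N) ** M" by (simp add: matrix_mul_assoc)
    also have "\<dots> = (N ** N) ** (M ** M)" by (simp add: MN matrix_mul_assoc)
    finally show ?thesis using NN MM by simp
  qed
  show ?thesis unfolding S using part1 card NN MM NMsq by auto
qed


end
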